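(* There are $15$ syzygetic quadruples. Denote the vanishing order of the differential form $\omega=T\,dz_0\wedge dz_1\wedge dz_2$ (pulled back to $\tilde D$) at $q_\nu=0$ by $k_\nu$. Then one has for $(k_0,k_1,k_2)$ the possibilities $(0,0,0)$ (eight cases), $(1,1,1)$ (one case), $(0,0,1)$ (two cases), $(0,1,0)$ (two cases), $(1,0,0)$ (two cases).
   Context: Genus two, $Z=\begin{pmatrix}z_0&z_1\\ z_1&z_2\end{pmatrix}\in\mathbb{H}_2$. Even theta characteristics $m={a\choose b}\in(\mathbb{Z}/2\mathbb{Z})^4$ (${}^ta\,b=0$), theta constants $\vartheta[m](Z)=\sum_{g\in\mathbb{Z}^2}e^{\pi i(Z[g+a/2]+{}^tb(g+a/2))}$. A syzygetic quadruple is a set of four distinct even characteristics such that the sum of any three is even. For a syzygetic quadruple let $\mathfrak{n}=\{n_1,\dots,n_6\}$ be the complementary even characteristics and $T=T_{\mathfrak{n}}=\prod_{\nu=1}^6\vartheta[n_\nu]$, a cusp form of weight 3 for a conjugate of $\Gamma_{2,0}[2]$ whose character is trivial on $\Gamma_2[4]$. Use the normal coordinates of level 4: $q_0=e^{2\pi i(z_0+z_1)/4}$, $q_2=e^{2\pi i(z_2+z_1)/4}$, $q_1=e^{-2\pi i z_1/4}$; the image $D$ of $\mathbb{H}_2$ is a Reinhardt domain with completion $\tilde D=D\cup\{q\in\mathbb{C}^3;\ q_0q_1q_2=0\}$, which maps locally biholomorphically to Igusa's desingularization $\tilde X(4)$ (monoidal transform along the boundary of the Satake compactification of $\mathbb{H}_2/\Gamma_2[4]$).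 Pulled back to $\tilde D$, $\omega$ becomes $C\,\frac{T}{q_0q_1q_2}\,dq_0\wedge dq_1\wedge dq_2$ with a constant $C$, where $T$ is written as a power series in $q_0,q_1,q_2$. *)

theory Defs
  imports Complex_Main "HOL-Library.Multiset"
begin

text \<open>A characteristic m = (a1,a2,b1,b2) in (Z/2Z)^4, with a = (a1,a2), b = (b1,b2);
  True stands for 1 and False for 0.\<close>
type_synonym tchar = "bool \<times> bool \<times> bool \<times> bool"

definition bit :: "bool \<Rightarrow> int" where
  "bit x = (if x then 1 else 0)"

definition even_char :: "tchar \<Rightarrow> bool" where
  "even_char m = (case m of (a1, a2, b1, b2) \<Rightarrow> even (bit a1 * bit b1 + bit a2 * bit b2))"

definition char_add :: "tchar \<Rightarrow> tchar \<Rightarrow> tchar" where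
  "char_add m n = (case m of (a1, a2, b1, b2) \<Rightarrow> case n of (c1, c2, d1, d2) \<Rightarrow>
      (a1 \<noteq> c1, a2 \<noteq> c2, b1 \<noteq> d1, b2 \<noteq> d2))"

definition even_chars :: "tchar set" where
  "even_chars = {m. even_char m}"

definition syzygetic :: "tchar set \<Rightarrow> bool" where
  "syzygetic S \<longleftrightarrow> S \<subseteq> even_chars \<and> card S = 4 \<and>
     (\<forall>m1\<in>S. \<forall>m2\<in>S. \<forall>m3\<in>S. m1 \<noteq> m2 \<and> m1 \<noteq> m3 \<and> m2 \<noteq> m3 \<longrightarrow>
        even_char (char_add (char_add m1 m2) m3))"

definition syz_quadruples :: "tchar set set" where
  "syz_quadruples = {S. syzygetic S}"

definition compl_chars :: "tchar set \<Rightarrow> tchar set" where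
  "compl_chars S = even_chars - S"

text \<open>The term of the theta series of characteristic m = (a,b) indexed by g in Z^2:
  with x = g + a/2 and y = 2x = 2g + a one has
    exp(pi i (Z[x] + b.x)) = exp(pi i (b1 y1 + b2 y2)/2) * q0^(y1^2/2) q1^((y1-y2)^2/2) q2^(y2^2/2)
  where q0 = e^(2 pi i (z0+z1)/4), q2 = e^(2 pi i (z2+z1)/4), q1 = e^(-2 pi i z1/4).
  theta_exp2 gives the exponents doubled (i.e. exponents of q_nu^(1/2)),
  theta_tc the constant factor.\<close>
definition theta_y :: "tchar \<Rightarrow> int \<times> int \<Rightarrow> int \<times> int" where
  "theta_y m g = (case m of (a1, a2, b1, b2) \<Rightarrow> (2 * fst g + bit a1, 2 * snd g + bit a2))"

definition theta_exp2 :: "tchar \<Rightarrow> int \<times> int \<Rightarrow> int \<times> int \<times> int" where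
  "theta_exp2 m g = (case theta_y m g of (y1, y2) \<Rightarrow> (y1^2, (y1 - y2)^2, y2^2))"

definition theta_tc :: "tchar \<Rightarrow> int \<times> int \<Rightarrow> complex" where
  "theta_tc m g = (case m of (a1, a2, b1, b2) \<Rightarrow> case theta_y m g of (y1, y2) \<Rightarrow>
      exp (pi * \<i> * of_int (bit b1 * y1 + bit b2 * y2) / 2))"

text \<open>Coefficient of q0^(N0/2) q1^(N1/2) q2^(N2/2) in the q-expansion of
  T = prod over the complementary characteristics of theta[n], obtained by multiplying
  out the six theta series term by term and collecting equal monomials
  (for each N only finitely many index families G contribute).\<close>
definition T_coeff :: "tchar set \<Rightarrow> int \<times> int \<times> int \<Rightarrow> complex" where
  "T_coeff S N = (\<Sum>G \<in> {G :: tchar \<Rightarrow> int \<times> int.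
        (\<forall>m. m \<notin> compl_chars S \<longrightarrow> G m = (0, 0)) \<and>
        (\<Sum>m\<in>compl_chars S. fst (theta_exp2 m (G m))) = fst N \<and>
        (\<Sum>m\<in>compl_chars S. fst (snd (theta_exp2 m (G m)))) = fst (snd N) \<and>
        (\<Sum>m\<in>compl_chars S. snd (snd (theta_exp2 m (G m)))) = snd (snd N)}.
      (\<Prod>m\<in>compl_chars S. theta_tc m (G m)))"

definition comp3 :: "nat \<Rightarrow> int \<times> int \<times> int \<Rightarrow> int" where
  "comp3 \<nu> N = (if \<nu> = 0 then fst N else if \<nu> = 1 then fst (snd N) else snd (snd N))"

definition T_ord :: "tchar set \<Rightarrow> nat \<Rightarrow> real" where
  "T_ord S \<nu> = Inf {real_of_int (comp3 \<nu> N) / 2 | N. T_coeff S N \<noteq> 0}"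

text \<open>Vanishing order k_nu of omega = C (T / (q0 q1 q2)) dq0 dq1 dq2 along q_nu = 0.\<close>
definition omega_ord :: "tchar set \<Rightarrow> nat \<Rightarrow> real" where
  "omega_ord S \<nu> = T_ord S \<nu> - 1"

definition kvec :: "tchar set \<Rightarrow> real \<times> real \<times> real" where
  "kvec S = (omega_ord S 0, omega_ord S 1, omega_ord S 2)"

end

theory Submission
  imports Defs "HOL-Library.FuncSet"
begin


definition evl :: "tchar list" where
 "evl = [(False,False,False,False),(False,False,False,True),(False,False,True,False),(False,False,True,True),
  (False,True,False,False),(False,True,True,False),(True,False,False,False),(True,False,False,True),
  (True,True,False,False),(True,True,True,True)]"

lemma ev_simp0: "even_char (a1,a2,b1,b2) = ((a1 \<and> b1) = (a2 \<and> b2))"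
  by (auto simp: even_char_def bit_def)
lemma even_chars_evl: "even_chars = set evl"
proof (rule set_eqI)
  fix m :: tchar
  obtain a1 a2 b1 b2 where m: "m = (a1,a2,b1,b2)" by (cases m) auto
  show "m \<in> even_chars \<longleftrightarrow> m \<in> set evl"
    unfolding m even_chars_def mem_Collect_eq ev_simp0 evl_def
    by (cases a1; cases a2; cases b1; cases b2) simp_all
qed

fun subs :: "nat \<Rightarrow> 'a list \<Rightarrow> 'a list list" where
  "subs 0 xs = [[]]"
| "subs (Suc k) [] = []"
| "subs (Suc k) (x # xs) = map ((#) x) (subs k xs) @ subs (Suc k) xs"

lemma subs_complete:
  "S \<subseteq> set xs \<Longrightarrow> finite S \<Longrightarrow> card S = k \<Longrightarrow> \<exists>ys\<in>set (subs k xs). S = set ys"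
proof (induction k xs arbitrary: S rule: subs.induct)
  case (1 xs) then show ?case by auto
next
  case (2 k) then show ?case by auto
next
  case (3 k x xs)
  show ?case
  proof (cases "x \<in> S")
    case True
    have "S - {x} \<subseteq> set xs" using 3 by auto
    moreover have "card (S - {x}) = k" using 3 True by simp
    ultimately obtain ys where "ys\<in>set (subs k xs)" "S - {x} = set ys" using 3(1)[of "S - {x}"] 3(4) by auto
    then show ?thesis using True by (intro bexI[of _ "x#ys"]) auto
  next
    case False
    then have "S \<subseteq> set xs" using 3 by auto
    then obtain ys where "ys\<in>set (subs (Suc k) xs)" "S = set ys" using 3(2)[of S] 3(4,5) by auto
    then show ?thesis by auto
  qed
qed

definition LL :: "tchar list list" where
"LL = [
[(False,False,False,False),(False,True,False,False),(True,False,False,False),(True,True,False,False)],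
[(False,False,False,False),(False,True,True,False),(True,False,False,True),(True,True,True,True)],
[(False,False,False,True),(False,True,False,False),(True,False,False,True),(True,True,False,False)],
[(False,False,False,True),(False,True,True,False),(True,False,False,False),(True,True,True,True)],
[(False,False,True,False),(False,True,False,False),(True,False,False,True),(True,True,True,True)],
[(False,False,True,False),(False,True,True,False),(True,False,False,False),(True,True,False,False)],
[(False,False,True,True),(False,True,False,False),(True,False,False,False),(True,True,True,True)],
[(False,False,True,True),(False,True,True,False),(True,False,False,True),(True,True,False,False)],
[(False,False,False,False),(False,False,False,True),(False,False,True,False),(False,False,True,True)],
[(False,False,False,False),(False,False,False,True),(True,False,False,False),(True,False,False,True)],
[(False,False,True,False),(False,False,True,True),(True,False,False,False),(True,False,False,True)],
[(False,False,False,False),(False,False,True,True),(True,True,False,False),(True,True,True,True)],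
[(False,False,False,True),(False,False,True,False),(True,True,False,False),(True,True,True,True)],
[(False,False,False,False),(False,False,True,False),(False,True,False,False),(False,True,True,False)],
[(False,False,False,True),(False,False,True,True),(False,True,False,False),(False,True,True,False)]]"

lemma ev_simp: "even_char (a1,a2,b1,b2) = ((a1 \<and> b1) = (a2 \<and> b2))"
  by (auto simp: even_char_def bit_def)
lemma add_simp: "char_add (a1,a2,b1,b2) (c1,c2,d1,d2) = (a1 \<noteq> c1, a2 \<noteq> c2, b1 \<noteq> d1, b2 \<noteq> d2)"
  by (simp add: char_add_def)

definition ev2 :: "tchar \<Rightarrow> bool" where
  "ev2 m = (case m of (a1,a2,b1,b2) \<Rightarrow> ((a1 \<and> b1) = (a2 \<and> b2)))"
definition add2 :: "tchar \<Rightarrow> tchar \<Rightarrow> tchar" where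
  "add2 m n = (case m of (a1, a2, b1, b2) \<Rightarrow> case n of (c1, c2, d1, d2) \<Rightarrow>
      (a1 \<noteq> c1, a2 \<noteq> c2, b1 \<noteq> d1, b2 \<noteq> d2))"
definition chk :: "tchar list \<Rightarrow> bool" where
  "chk ys = (list_all (\<lambda>m1. list_all (\<lambda>m2. list_all (\<lambda>m3. m1 \<noteq> m2 \<and> m1 \<noteq> m3 \<and> m2 \<noteq> m3 \<longrightarrow> ev2 (add2 (add2 m1 m2) m3)) ys) ys) ys \<longrightarrow> ys \<in> set LL)"

lemma check: "list_all chk (subs 4 evl)"
  by code_simp



definition ind :: "nat \<Rightarrow> tchar \<Rightarrow> int" where
  "ind \<nu> m = (case m of (a1, a2, b1, b2) \<Rightarrow>
     if \<nu> = 0 then bit a1 else if \<nu> = 1 then bit (a1 \<noteq> a2) else bit a2)"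

definition opt :: "tchar \<Rightarrow> (int \<times> int) set" where
  "opt m = (case m of (a1, a2, b1, b2) \<Rightarrow> {(0,0), (if a1 then -1 else 0, if a2 then -1 else 0)})"

lemma sq_odd: "(2 * x + 1)^2 \<ge> (1::int)"
proof -
  have "2 * x + 1 \<noteq> 0" by presburger
  then have "\<bar>2*x+1\<bar> \<ge> 1" by linarith
  then show ?thesis by (metis abs_ge_self abs_power2 le_less_trans linorder_not_less one_le_power power2_eq_square zero_le_one abs_le_square_iff one_power2)
qed

lemma sq_odd_eq: "(2 * x + 1)^2 = (1::int) \<longleftrightarrow> x = 0 \<or> x = -1"
proof -
  have "(2 * x + 1)^2 = 1 \<longleftrightarrow> 2*x+1 = 1 \<or> 2*x+1 = -1"
    by (simp add: power2_eq_1_iff)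
  then show ?thesis by auto
qed

lemma e_ge: "comp3 \<nu> (theta_exp2 m g) \<ge> ind \<nu> m"
proof -
  obtain a1 a2 b1 b2 where m: "m = (a1,a2,b1,b2)" by (cases m) auto
  obtain x y where g: "g = (x,y)" by (cases g) auto
  have h1: "(2*x + bit a1)^2 \<ge> bit a1" by (cases a1) (auto simp: bit_def sq_odd)
  have h2: "(2*y + bit a2)^2 \<ge> bit a2" by (cases a2) (auto simp: bit_def sq_odd)
  have h3: "((2*x + bit a1) - (2*y + bit a2))^2 \<ge> bit (a1 \<noteq> a2)"
  proof (cases "a1 = a2")
    case True then show ?thesis by (simp add: bit_def)
  next
    case False
    then obtain z where z: "(2*x + bit a1) - (2*y + bit a2) = 2*z + 1"
    proof (cases a1)
      case True then have "\<not> a2" using False by simp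
      then show ?thesis using True that[of "x-y"] by (simp add: bit_def algebra_simps)
    next
      case f: False then have "a2" using False by simp
      then show ?thesis using f that[of "x-y-1"] by (simp add: bit_def algebra_simps)
    qed
    have "1 \<le> ((2*x + bit a1) - (2*y + bit a2))^2" unfolding z by (rule sq_odd)
    then show ?thesis using False by (simp add: bit_def)
  qed
  show ?thesis using h1 h2 h3
    by (auto simp: m g comp3_def ind_def theta_exp2_def theta_y_def)
qed

lemma e_eq: "theta_exp2 m g = (ind 0 m, ind 1 m, ind 2 m) \<longleftrightarrow> g \<in> opt m"
proof -
  obtain a1 a2 b1 b2 where m: "m = (a1,a2,b1,b2)" by (cases m) auto
  obtain x y where g: "g = (x,y)" by (cases g) auto
  show ?thesis
    by (cases a1; cases a2) (auto simp: m g ind_def opt_def theta_exp2_def theta_y_def bit_def sq_odd_eq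
        power2_eq_1_iff)
qed

definition cnt :: "tchar set \<Rightarrow> nat \<Rightarrow> int" where
  "cnt S \<nu> = (\<Sum>m\<in>compl_chars S. ind \<nu> m)"

definition Gs :: "tchar set \<Rightarrow> int \<times> int \<times> int \<Rightarrow> (tchar \<Rightarrow> int \<times> int) set" where
  "Gs S N = {G :: tchar \<Rightarrow> int \<times> int.
        (\<forall>m. m \<notin> compl_chars S \<longrightarrow> G m = (0, 0)) \<and>
        (\<Sum>m\<in>compl_chars S. fst (theta_exp2 m (G m))) = fst N \<and>
        (\<Sum>m\<in>compl_chars S. fst (snd (theta_exp2 m (G m)))) = fst (snd N) \<and>
        (\<Sum>m\<in>compl_chars S. snd (snd (theta_exp2 m (G m)))) = snd (snd N)}"

lemma T_coeff_Gs: "T_coeff S N = (\<Sum>G\<in>Gs S N. \<Prod>m\<in>compl_chars S. theta_tc m (G m))"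
  unfolding T_coeff_def Gs_def by simp

lemma finite_compl: "finite (compl_chars S)"
proof -
  have "finite (UNIV :: tchar set)" by simp
  then show ?thesis by (rule finite_subset[rotated]) auto
qed

lemma comp3_sum: "G \<in> Gs S N \<Longrightarrow> comp3 \<nu> N = (\<Sum>m\<in>compl_chars S. comp3 \<nu> (theta_exp2 m (G m)))"
  unfolding Gs_def comp3_def by auto

lemma lower: "T_coeff S N \<noteq> 0 \<Longrightarrow> comp3 \<nu> N \<ge> cnt S \<nu>"
proof -
  assume "T_coeff S N \<noteq> 0"
  then have "Gs S N \<noteq> {}" unfolding T_coeff_Gs by auto
  then obtain G where G: "G \<in> Gs S N" by auto
  have "cnt S \<nu> \<le> (\<Sum>m\<in>compl_chars S. comp3 \<nu> (theta_exp2 m (G m)))"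
    unfolding cnt_def by (rule sum_mono) (rule e_ge)
  then show ?thesis using comp3_sum[OF G] by simp
qed

definition N0 :: "tchar set \<Rightarrow> int \<times> int \<times> int" where
  "N0 S = (cnt S 0, cnt S 1, cnt S 2)"

lemma comp3_N0: "comp3 \<nu> (N0 S) = cnt S \<nu>"
  unfolding comp3_def N0_def cnt_def ind_def by (auto split: prod.splits)

lemma sum_eq_ge:
  fixes f g :: "'a \<Rightarrow> int"
  assumes "finite A" "\<And>x. x \<in> A \<Longrightarrow> g x \<le> f x" "sum f A = sum g A" "x \<in> A"
  shows "f x = g x"
proof -
  have "(\<Sum>x\<in>A. f x - g x) = 0" using assms(3) by (simp add: sum_subtractf)
  then have "\<forall>x\<in>A. f x - g x = 0" using assms(1,2) by (subst (asm) sum_nonneg_eq_0_iff) auto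
  then show ?thesis using assms(4) by auto
qed

definition D :: "tchar set \<Rightarrow> (tchar \<Rightarrow> int \<times> int) set" where
  "D S = {G. \<forall>m. (m \<in> compl_chars S \<longrightarrow> G m \<in> opt m) \<and> (m \<notin> compl_chars S \<longrightarrow> G m = (0,0))}"

lemma Gs_N0: "Gs S (N0 S) = D S"
proof (intro equalityI subsetI)
  fix G assume G: "G \<in> Gs S (N0 S)"
  have eq: "comp3 \<nu> (theta_exp2 m (G m)) = ind \<nu> m" if "m \<in> compl_chars S" for \<nu> m
  proof -
    have "(\<Sum>m\<in>compl_chars S. comp3 \<nu> (theta_exp2 m (G m))) = (\<Sum>m\<in>compl_chars S. ind \<nu> m)"
      using comp3_sum[OF G, of \<nu>] comp3_N0[of \<nu> S] unfolding cnt_def by simp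
    then show ?thesis using sum_eq_ge[where f="\<lambda>m. comp3 \<nu> (theta_exp2 m (G m))" and g="ind \<nu>", OF finite_compl e_ge _ that] by blast
  qed
  have "G m \<in> opt m" if "m \<in> compl_chars S" for m
  proof -
    have "theta_exp2 m (G m) = (ind 0 m, ind 1 m, ind 2 m)"
      using eq[OF that, of 0] eq[OF that, of 1] eq[OF that, of 2]
      by (cases "theta_exp2 m (G m)") (auto simp: comp3_def)
    then show ?thesis using e_eq by blast
  qed
  then show "G \<in> D S" using G unfolding D_def Gs_def by auto
next
  fix G assume G: "G \<in> D S"
  have eq: "theta_exp2 m (G m) = (ind 0 m, ind 1 m, ind 2 m)" if "m \<in> compl_chars S" for m
    using G that e_eq unfolding D_def by blast
  show "G \<in> Gs S (N0 S)"
    using G unfolding Gs_def D_def N0_def cnt_def by (auto simp: eq intro!: sum.cong)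
qed

lemma T_coeff_N0: "T_coeff S (N0 S) = (\<Prod>m\<in>compl_chars S. \<Sum>g\<in>opt m. theta_tc m g)"
proof -
  let ?C = "compl_chars S"
  let ?F = "\<lambda>h. \<Prod>m\<in>?C. theta_tc m (h m)"
  have fo: "finite (opt m)" for m by (cases m) (auto simp: opt_def)
  have inj: "inj_on (\<lambda>G. restrict G ?C) (D S)"
  proof (rule inj_onI)
    fix G G' assume "G \<in> D S" "G' \<in> D S" "restrict G ?C = restrict G' ?C"
    then show "G = G'" unfolding D_def by (auto simp: fun_eq_iff restrict_def split: if_splits) metis
  qed
  have img: "(\<lambda>G. restrict G ?C) ` D S = PiE ?C opt"
  proof (intro equalityI subsetI)
    fix h assume "h \<in> (\<lambda>G. restrict G ?C) ` D S" then show "h \<in> PiE ?C opt"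
      unfolding D_def by auto
  next
    fix h assume h: "h \<in> PiE ?C opt"
    let ?G = "\<lambda>m. if m \<in> ?C then h m else (0,0)"
    have "?G \<in> D S" using h unfolding D_def by auto
    moreover have "h = restrict ?G ?C" using h by (auto simp: fun_eq_iff restrict_def PiE_def extensional_def)
    ultimately show "h \<in> (\<lambda>G. restrict G ?C) ` D S" by blast
  qed
  have "(\<Prod>m\<in>?C. \<Sum>g\<in>opt m. theta_tc m g) = (\<Sum>h\<in>PiE ?C opt. ?F h)"
    by (rule prod_sum_PiE[OF finite_compl fo])
  also have "\<dots> = (\<Sum>G\<in>D S. ?F (restrict G ?C))"
    using sum.reindex[OF inj, of ?F] img by simp
  also have "\<dots> = (\<Sum>G\<in>D S. ?F G)"
    by (intro sum.cong refl prod.cong) auto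
  finally show ?thesis using T_coeff_Gs Gs_N0 by simp
qed

lemma exp_pi2: "exp (pi * \<i> * of_int 2 / 2) = -1" "exp (pi * \<i> * of_int (-2) / 2) = -1"
  by (simp_all add: exp_minus)

lemma opt_sum_nz: "m \<in> even_chars \<Longrightarrow> (\<Sum>g\<in>opt m. theta_tc m g) \<noteq> 0"
proof -
  assume "m \<in> even_chars"
  then obtain a1 a2 b1 b2 where m: "m = (a1,a2,b1,b2)" and ev: "even_char m" by (cases m) (auto simp: even_chars_def)
  show ?thesis using ev
    by (cases a1; cases a2; cases b1; cases b2)
       (simp_all add: m opt_def theta_tc_def theta_y_def bit_def even_char_def exp_minus)
qed

lemma T_coeff_N0_nz: "T_coeff S (N0 S) \<noteq> 0"
proof -
  have "compl_chars S \<subseteq> even_chars" by (auto simp: compl_chars_def)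
  then show ?thesis unfolding T_coeff_N0 using opt_sum_nz finite_compl
    by (auto simp: prod_zero_iff)
qed

lemma T_ord_eq: "T_ord S \<nu> = real_of_int (cnt S \<nu>) / 2"
  unfolding T_ord_def
proof (rule cInf_eq_minimum)
  show "real_of_int (cnt S \<nu>) / 2 \<in> {real_of_int (comp3 \<nu> N) / 2 |N. T_coeff S N \<noteq> 0}"
    using T_coeff_N0_nz comp3_N0 by (metis (mono_tags, lifting) mem_Collect_eq)
next
  fix x assume "x \<in> {real_of_int (comp3 \<nu> N) / 2 |N. T_coeff S N \<noteq> 0}"
  then show "real_of_int (cnt S \<nu>) / 2 \<le> x" using lower by fastforce
qed

lemma kvec_eq: "kvec S = (real_of_int (cnt S 0) / 2 - 1, real_of_int (cnt S 1) / 2 - 1, real_of_int (cnt S 2) / 2 - 1)"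
  unfolding kvec_def omega_ord_def T_ord_eq by simp


lemma check2: "list_all (\<lambda>ys. distinct ys \<and> length ys = 4 \<and> list_all (\<lambda>m. m \<in> set evl) ys \<and>
   list_all (\<lambda>m1. list_all (\<lambda>m2. list_all (\<lambda>m3. m1 \<noteq> m2 \<and> m1 \<noteq> m3 \<and> m2 \<noteq> m3 \<longrightarrow> ev2 (add2 (add2 m1 m2) m3)) ys) ys) ys) LL
   \<and> distinct (map (\<lambda>ys. filter (\<lambda>x. x \<in> set ys) evl) LL)"
  by code_simp

lemma ev2_eq: "ev2 m = even_char m"
  by (cases m) (simp add: ev2_def even_char_def bit_def)
lemma add2_eq: "add2 m n = char_add m n"
  by (simp add: add2_def char_add_def)

lemma syz_eq: "syz_quadruples = set (map set LL)"
proof (intro equalityI subsetI)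
  fix S assume "S \<in> syz_quadruples"
  then have S: "syzygetic S" by (simp add: syz_quadruples_def)
  then have "S \<subseteq> set evl" "card S = 4" by (auto simp: syzygetic_def even_chars_evl)
  moreover have "finite S" using \<open>card S = 4\<close> card_ge_0_finite by fastforce
  ultimately obtain ys where ys: "ys \<in> set (subs 4 evl)" "S = set ys" using subs_complete by blast
  then have "chk ys" using check by (simp add: list_all_iff)
  moreover have "list_all (\<lambda>m1. list_all (\<lambda>m2. list_all (\<lambda>m3. m1 \<noteq> m2 \<and> m1 \<noteq> m3 \<and> m2 \<noteq> m3 \<longrightarrow> ev2 (add2 (add2 m1 m2) m3)) ys) ys) ys"
    using S ys(2) by (simp add: list_all_iff syzygetic_def ev2_eq add2_eq)
  ultimately have "ys \<in> set LL" by (simp add: chk_def)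
  then show "S \<in> set (map set LL)" using ys by simp
next
  fix S assume "S \<in> set (map set LL)"
  then obtain ys where ys: "ys \<in> set LL" "S = set ys" by auto
  then have P: "distinct ys \<and> length ys = 4 \<and> list_all (\<lambda>m. m \<in> set evl) ys \<and>
   list_all (\<lambda>m1. list_all (\<lambda>m2. list_all (\<lambda>m3. m1 \<noteq> m2 \<and> m1 \<noteq> m3 \<and> m2 \<noteq> m3 \<longrightarrow> ev2 (add2 (add2 m1 m2) m3)) ys) ys) ys"
    using check2 by (simp add: list_all_iff)
  then have c: "card S = 4" using ys(2) distinct_card by fastforce
  have l1: "list_all (\<lambda>m. m \<in> set evl) ys" using P by (rule conjE) (erule conjE, erule conjE, assumption)
  have l2: "list_all (\<lambda>m1. list_all (\<lambda>m2. list_all (\<lambda>m3. m1 \<noteq> m2 \<and> m1 \<noteq> m3 \<and> m2 \<noteq> m3 \<longrightarrow> ev2 (add2 (add2 m1 m2) m3)) ys) ys) ys"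
    using P by (rule conjE) (erule conjE, erule conjE, assumption)
  have s: "S \<subseteq> even_chars" using l1 unfolding ys(2) even_chars_evl list_all_iff by blast
  have b: "\<forall>m1\<in>S. \<forall>m2\<in>S. \<forall>m3\<in>S. m1 \<noteq> m2 \<and> m1 \<noteq> m3 \<and> m2 \<noteq> m3 \<longrightarrow>
        even_char (char_add (char_add m1 m2) m3)"
    using l2 unfolding ys(2) list_all_iff ev2_eq add2_eq .
  show "S \<in> syz_quadruples" using c s b
    unfolding syz_quadruples_def syzygetic_def by blast
qed

lemma dist: "distinct (map set LL)"
proof -
  have d: "distinct (map (\<lambda>ys. filter (\<lambda>x. x \<in> set ys) evl) LL)" using check2 by blast
  have "map (\<lambda>ys. filter (\<lambda>x. x \<in> set ys) evl) LL = map (\<lambda>S. filter (\<lambda>x. x \<in> S) evl) (map set LL)"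
    by (simp add: comp_def)
  then have "distinct (map (\<lambda>S. filter (\<lambda>x. x \<in> S) evl) (map set LL))" using d by (simp only:)
  then show ?thesis by (auto simp: distinct_map inj_on_def)
qed

lemma cnt_set: "cnt (set ys) \<nu> = sum_list (map (ind \<nu>) (filter (\<lambda>x. x \<notin> set ys) evl))"
proof -
  have d: "distinct evl" unfolding evl_def by simp
  have "compl_chars (set ys) = set (filter (\<lambda>x. x \<notin> set ys) evl)"
    by (auto simp: compl_chars_def even_chars_evl)
  then have "cnt (set ys) \<nu> = sum (ind \<nu>) (set (filter (\<lambda>x. x \<notin> set ys) evl))"
    unfolding cnt_def by (simp only:)
  also have "\<dots> = sum_list (map (ind \<nu>) (filter (\<lambda>x. x \<notin> set ys) evl))"
    by (rule sum_list_distinct_conv_sum_set[symmetric]) (rule distinct_filter[OF d])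
  finally show ?thesis .
qed

definition kvi :: "tchar list \<Rightarrow> int \<times> int \<times> int" where
  "kvi ys = (sum_list (map (ind 0) (filter (\<lambda>x. x \<notin> set ys) evl)),
             sum_list (map (ind 1) (filter (\<lambda>x. x \<notin> set ys) evl)),
             sum_list (map (ind 2) (filter (\<lambda>x. x \<notin> set ys) evl)))"

definition tor :: "int \<times> int \<times> int \<Rightarrow> real \<times> real \<times> real" where
  "tor c = (real_of_int (fst c) / 2 - 1, real_of_int (fst (snd c)) / 2 - 1, real_of_int (snd (snd c)) / 2 - 1)"

lemma kvi_vals: "map kvi LL = replicate 8 (2,2,2) @ [(4,4,4)] @ replicate 2 (2,2,4) @ replicate 2 (2,4,2) @ replicate 2 (4,2,2)"
  by (simp add: LL_def kvi_def evl_def ind_def bit_def numeral_eq_Suc)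

lemma kvec_kvi: "kvec (set ys) = tor (kvi ys)"
  unfolding kvec_eq cnt_set kvi_def tor_def by (simp only: fst_conv snd_conv)

lemma kvecs: "map (kvec \<circ> set) LL = replicate 8 (0, 0, 0) @ [(1, 1, 1)] @ replicate 2 (0, 0, 1)
      @ replicate 2 (0, 1, 0) @ replicate 2 (1, 0, 0)"
proof -
  have "map (kvec \<circ> set) LL = map tor (map kvi LL)" by (simp add: kvec_kvi)
  then show ?thesis unfolding kvi_vals by (simp add: tor_def numeral_eq_Suc)
qed

theorem proposition2p4:
  shows "card syz_quadruples = 15 \<and>
    image_mset kvec (mset_set syz_quadruples) =
      replicate_mset 8 (0, 0, 0) + {#(1, 1, 1)#} + replicate_mset 2 (0, 0, 1)
      + replicate_mset 2 (0, 1, 0) + replicate_mset 2 (1, 0, 0)"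
proof
  show "card syz_quadruples = 15" unfolding syz_eq using dist distinct_card[OF dist]
    by (simp add: LL_def)
  have "image_mset kvec (mset_set syz_quadruples) = mset (map (kvec \<circ> set) LL)"
    unfolding syz_eq mset_set_set[OF dist] by (simp add: image_mset.compositionality)
  also have "\<dots> = replicate_mset 8 (0, 0, 0) + {#(1, 1, 1)#} + replicate_mset 2 (0, 0, 1)
      + replicate_mset 2 (0, 1, 0) + replicate_mset 2 (1, 0, 0)"
    unfolding kvecs by (simp add: add.assoc)
  finally show "image_mset kvec (mset_set syz_quadruples) =
      replicate_mset 8 (0, 0, 0) + {#(1, 1, 1)#} + replicate_mset 2 (0, 0, 1)
      + replicate_mset 2 (0, 1, 0) + replicate_mset 2 (1, 0, 0)" .
qed

end
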